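(* Let $T\in L_{aut}(\mathcal B)$ be generalized hyperbolic. Then either $\overline{B(T)}=\mathcal B$, or $T$ has a hyperbolic component. More precisely, if $\overline{B(T)}\neq\mathcal B$ then the map induced by $T$ on the quotient space $\mathcal B/\overline{B(T)}$ is hyperbolic.
   Context: $\mathcal B$ is a Banach space. $T$ is generalized hyperbolic if there is a decomposition $\mathcal B=E^-\oplus E^+$ into complementary closed subspaces with $T(E^+)\subset E^+$, $T^{-1}(E^-)\subset E^-$, and $T|_{E^+}$, $T^{-1}|_{E^-}$ uniform contractions. The bounded set $B(T)$ is the set of $x$ for which there exist $K>0$ and strictly increasing sequences of positive integers $(k_n),(m_n)$ with $|T^{k_n}x|<K$ and $|T^{-m_n}x|<K$; for generalized hyperbolic $T$, $\overline{B(T)}$ is a closed subspace with $T(\overline{B(T)})=\overline{B(T)}$. An operator is hyperbolic if its spectrum does not meet the unit circle. $T$ has a hyperbolic component if there is a closed subspace $F\ne\mathcal B$ with $T(F)=F$ such that the induced map on $\mathcal B/F$ is hyperbolic. *)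

theory Defs
  imports "HOL-Analysis.Analysis"
begin

text \<open>Real Banach space 'a (a complex Banach space is in particular a real one).
  L_aut: bounded linear bijections (bounded inverse then automatic, but stated too).\<close>
definition laut :: "('a::banach \<Rightarrow> 'a) \<Rightarrow> bool" where
  "laut T \<longleftrightarrow> bounded_linear T \<and> bij T \<and> bounded_linear (inv T)"

definition uniform_contraction_on :: "'a set \<Rightarrow> ('a::real_normed_vector \<Rightarrow> 'a) \<Rightarrow> bool" where
  "uniform_contraction_on E S \<longleftrightarrow>
     (\<exists>C t. C > 0 \<and> 0 < t \<and> t < 1 \<and>
        (\<forall>n. \<forall>x\<in>E. norm ((S ^^ n) x) \<le> C * t ^ n * norm x))"

definition generalized_hyperbolic :: "('a::banach \<Rightarrow> 'a) \<Rightarrow> bool" where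
  "generalized_hyperbolic T \<longleftrightarrow>
     (\<exists>Em Ep. closed Em \<and> closed Ep \<and> subspace Em \<and> subspace Ep \<and>
        Em \<inter> Ep = {0} \<and> (\<forall>z. \<exists>u\<in>Em. \<exists>v\<in>Ep. z = u + v) \<and>
        T ` Ep \<subseteq> Ep \<and> inv T ` Em \<subseteq> Em \<and>
        uniform_contraction_on Ep T \<and> uniform_contraction_on Em (inv T))"

definition bounded_set :: "('a::banach \<Rightarrow> 'a) \<Rightarrow> 'a set" where
  "bounded_set T = {x. \<exists>K>0. \<exists>k m :: nat \<Rightarrow> nat.
      strict_mono k \<and> strict_mono m \<and> (\<forall>n. k n > 0 \<and> m n > 0) \<and>
      (\<forall>n. norm ((T ^^ k n) x) < K \<and> norm ((inv T ^^ m n) x) < K)}"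

text \<open>The operator induced by T on the quotient B/F (F a closed T-invariant subspace) is
  hyperbolic: no lambda = a + i b with |lambda| = 1 lies in its spectrum. The spectrum is
  taken for the complexification (B/F) x (B/F), on which T - lambda acts as
  (x,y) |-> (T x - a x + b y, T y - b x - a y); lambda is not in the spectrum iff this
  induced map is bijective on the quotient (bounded inverse is then automatic by the
  open mapping theorem, B/F being Banach).\<close>
definition quotient_hyperbolic :: "('a::banach \<Rightarrow> 'a) \<Rightarrow> 'a set \<Rightarrow> bool" where
  "quotient_hyperbolic T F \<longleftrightarrow>
     (\<forall>a b::real. a\<^sup>2 + b\<^sup>2 = 1 \<longrightarrow>
        (\<forall>x y. T x - a *\<^sub>R x + b *\<^sub>R y \<in> F \<and> T y - b *\<^sub>R x - a *\<^sub>R y \<in> F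
               \<longrightarrow> x \<in> F \<and> y \<in> F) \<and>
        (\<forall>u v. \<exists>x y. T x - a *\<^sub>R x + b *\<^sub>R y - u \<in> F \<and> T y - b *\<^sub>R x - a *\<^sub>R y - v \<in> F))"

definition has_hyperbolic_component :: "('a::banach \<Rightarrow> 'a) \<Rightarrow> bool" where
  "has_hyperbolic_component T \<longleftrightarrow>
     (\<exists>F. closed F \<and> subspace F \<and> F \<noteq> UNIV \<and> T ` F = F \<and> quotient_hyperbolic T F)"

end

theory Submission
  imports Defs
begin

lemma baire_step:
  fixes A :: "nat \<Rightarrow> 'a::banach set"
  assumes "\<And>k. closed (A k)" "(\<Union>k. A k) = UNIV"
  shows "\<exists>k. interior (A k) \<noteq> {}"
proof (rule ccontr)
  assume "\<not> ?thesis"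
  then have "euclidean interior_of \<Union>(range A) = {}"
    by (intro Baire_category_alt) (auto simp: completely_metrizable_space_euclidean assms)
  then show False using assms(2) by simp
qed

lemma approx_ball:
  fixes Em Ep :: "'a::banach set"
  assumes sm: "subspace Em" and sp: "subspace Ep"
    and dec: "\<forall>z. \<exists>u\<in>Em. \<exists>v\<in>Ep. z = u + v"
  shows "\<exists>M>0. \<forall>y \<epsilon>. \<epsilon> > 0 \<longrightarrow> (\<exists>u\<in>Em. \<exists>v\<in>Ep. norm u \<le> M * norm y \<and> norm v \<le> M * norm y \<and> norm (y - (u + v)) < \<epsilon>)"
proof -
  define W where "W \<rho> = {u+v | u v. u\<in>Em \<and> v\<in>Ep \<and> norm u \<le> \<rho> \<and> norm v \<le> \<rho>}" for \<rho> :: real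
  have "(\<Union>k. closure (W (real k))) = UNIV"
  proof -
    { fix z :: 'a
      obtain u v where uv: "u\<in>Em" "v\<in>Ep" "z = u+v" using dec by blast
      define k where "k = nat \<lceil>max (norm u) (norm v)\<rceil>"
      have "norm u \<le> real k" "norm v \<le> real k" unfolding k_def by linarith+
      then have "z \<in> W (real k)" unfolding W_def using uv by blast
      then have "z \<in> (\<Union>k. closure (W (real k)))" using closure_subset by blast }
    then show ?thesis by blast
  qed
  then obtain k where "interior (closure (W (real k))) \<noteq> {}"
    using baire_step[of "\<lambda>k. closure (W (real k))"] by auto
  then obtain x0 where "x0 \<in> interior (closure (W (real k)))" by blast
  then obtain r where r: "r > 0" "ball x0 r \<subseteq> closure (W (real k))"
    using open_interior openE interior_subset by (metis subset_trans)
  have key: "\<exists>u\<in>Em. \<exists>v\<in>Ep. norm u \<le> k \<and> norm v \<le> k \<and> norm (y - (u+v)) < \<epsilon>"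
    if hy: "norm y < r" and he: "\<epsilon> > 0" for y \<epsilon>
  proof -
    have "x0 + y \<in> closure (W k)" "x0 - y \<in> closure (W k)"
      using r hy by (auto simp: dist_norm)
    then obtain w1 w2 where w: "w1 \<in> W k" "dist w1 (x0+y) < \<epsilon>" "w2 \<in> W k" "dist w2 (x0-y) < \<epsilon>"
      using closure_approachable he by metis
    then obtain u1 v1 u2 v2 where uv: "w1 = u1+v1" "u1\<in>Em" "v1\<in>Ep" "norm u1 \<le> k" "norm v1 \<le> k"
      "w2 = u2+v2" "u2\<in>Em" "v2\<in>Ep" "norm u2 \<le> k" "norm v2 \<le> k"
      unfolding W_def by blast
    define u where "u = (1/2) *\<^sub>R (u1 - u2)"
    define v where "v = (1/2) *\<^sub>R (v1 - v2)"
    have "u \<in> Em" "v \<in> Ep" unfolding u_def v_def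
      using uv sm sp by (auto intro: subspace_mul subspace_diff)
    moreover have "norm u \<le> k"
      using norm_triangle_ineq4[of u1 u2] uv unfolding u_def by simp
    moreover have "norm v \<le> k"
      using norm_triangle_ineq4[of v1 v2] uv unfolding v_def by simp
    moreover have "y - (u+v) = (1/2) *\<^sub>R (((x0+y) - w1) - ((x0-y) - w2))"
      unfolding u_def v_def uv by (simp add: algebra_simps flip: scaleR_add_left)
    then have "norm (y - (u+v)) = (1/2) * norm (((x0+y) - w1) - ((x0-y) - w2))"
      by (simp only: norm_scaleR)
    then have "norm (y - (u+v)) \<le> (1/2) * (norm ((x0+y) - w1) + norm ((x0-y) - w2))"
      using norm_triangle_ineq4[of "(x0+y) - w1" "(x0-y) - w2"] by argo
    then have "norm (y - (u+v)) < \<epsilon>" using w by (simp add: dist_norm norm_minus_commute)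
    ultimately show ?thesis by blast
  qed
  define M where "M = 2 * real k / r + 1"
  have "M > 0" unfolding M_def using r(1) by (intro add_nonneg_pos divide_nonneg_pos) auto
  moreover have "\<exists>u\<in>Em. \<exists>v\<in>Ep. norm u \<le> M * norm y \<and> norm v \<le> M * norm y \<and> norm (y - (u + v)) < \<epsilon>"
    if he: "\<epsilon> > 0" for y \<epsilon>
  proof (cases "y = 0")
    case True
    then show ?thesis using he sm sp by (auto intro!: bexI[of _ 0] subspace_0)
  next
    case False
    define s where "s = r / (2 * norm y)"
    have s: "s > 0" using False r by (simp add: s_def)
    have "norm (s *\<^sub>R y) < r" using False r by (simp add: s_def)
    then obtain u' v' where uv': "u'\<in>Em" "v'\<in>Ep" "norm u' \<le> k" "norm v' \<le> k"
      "norm (s *\<^sub>R y - (u'+v')) < \<epsilon> * s"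
      using key[of "s *\<^sub>R y" "\<epsilon> * s"] s he by auto
    define u where "u = (1/s) *\<^sub>R u'"
    define v where "v = (1/s) *\<^sub>R v'"
    have "u \<in> Em" "v \<in> Ep" unfolding u_def v_def using uv' sm sp by (auto intro: subspace_mul)
    have ks: "k / s \<le> M * norm y"
      using False r unfolding s_def M_def by (simp add: field_simps)
    have "norm u \<le> k / s" unfolding u_def using uv' s by (simp add: field_simps)
    moreover have "norm v \<le> k / s" unfolding v_def using uv' s by (simp add: field_simps)
    moreover have "y - (u+v) = (1/s) *\<^sub>R (s *\<^sub>R y - (u'+v'))"
      unfolding u_def v_def using s by (simp add: algebra_simps)
    then have "norm (y - (u+v)) = norm (s *\<^sub>R y - (u'+v')) / s" using s by simp
    then have "s * norm (y - (u+v)) < s * \<epsilon>" using uv' s by (simp add: field_simps)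
    then have "norm (y - (u+v)) < \<epsilon>" using s by simp
    ultimately show ?thesis using ks \<open>u \<in> Em\<close> \<open>v \<in> Ep\<close> by force
  qed
  ultimately show ?thesis by blast
qed

lemma geom_bound:
  fixes f :: "nat \<Rightarrow> 'a::banach"
  assumes b: "\<And>n. norm (f n) \<le> K * q^n" and q: "0 \<le> q" "q < 1"
  shows "summable f" "norm (suminf f) \<le> K / (1-q)"
proof -
  have sg: "summable (\<lambda>n. K * q^n)" using q by (intro summable_mult summable_geometric) simp
  have sn: "summable (\<lambda>n. norm (f n))"
    by (rule summable_comparison_test'[OF sg]) (use b in simp)
  then show "summable f" by (rule summable_norm_cancel)
  have "norm (suminf f) \<le> (\<Sum>n. norm (f n))" by (rule summable_norm[OF sn])
  also have "\<dots> \<le> (\<Sum>n. K * q^n)" by (rule suminf_le[OF b sn sg])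
  also have "\<dots> = K / (1-q)" using q by (simp add: suminf_mult suminf_geometric summable_geometric)
  finally show "norm (suminf f) \<le> K / (1-q)" .
qed

lemma suminf_in_closed_subspace:
  fixes f :: "nat \<Rightarrow> 'a::banach"
  assumes "closed S" "subspace S" "summable f" "\<And>n. f n \<in> S"
  shows "suminf f \<in> S"
proof -
  have "(\<lambda>n. \<Sum>i<n. f i) \<longlonglongrightarrow> suminf f" by (rule summable_LIMSEQ[OF assms(3)])
  moreover have "\<forall>n. (\<Sum>i<n. f i) \<in> S" using assms by (auto intro: subspace_sum)
  ultimately show ?thesis using closed_sequentially[OF assms(1), of "\<lambda>n. \<Sum>i<n. f i" "suminf f"] by simp
qed

lemma bounded_proj:
  fixes Em Ep :: "'a::banach set"
  assumes cm: "closed Em" and cp: "closed Ep" and sm: "subspace Em" and sp: "subspace Ep"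
    and int0: "Em \<inter> Ep = {0}" and dec: "\<forall>z. \<exists>u\<in>Em. \<exists>v\<in>Ep. z = u + v"
  shows "\<exists>M>0. \<forall>u\<in>Em. \<forall>v\<in>Ep. norm u \<le> M * norm (u + v)"
proof -
  obtain M0 where M0: "M0 > 0" and ap: "\<forall>y \<epsilon>. \<epsilon> > 0 \<longrightarrow> (\<exists>u\<in>Em. \<exists>v\<in>Ep. norm u \<le> M0 * norm y \<and> norm v \<le> M0 * norm y \<and> norm (y - (u + v)) < \<epsilon>)"
    using approx_ball[OF sm sp dec] by blast
  define P where "P y \<epsilon> p \<longleftrightarrow> fst p \<in> Em \<and> snd p \<in> Ep \<and> norm (fst p) \<le> M0 * norm y \<and> norm (snd p) \<le> M0 * norm y \<and> norm (y - (fst p + snd p)) < \<epsilon>" for y \<epsilon> p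
  have ex: "\<forall>q. \<exists>p. snd q > 0 \<longrightarrow> P (fst q) (snd q) p"
  proof
    fix q :: "'a \<times> real"
    show "\<exists>p. snd q > 0 \<longrightarrow> P (fst q) (snd q) p"
    proof (cases "snd q > 0")
      case True
      then obtain u v where "u\<in>Em" "v\<in>Ep" "norm u \<le> M0 * norm (fst q)" "norm v \<le> M0 * norm (fst q)" "norm (fst q - (u + v)) < snd q"
        using ap by blast
      then have "P (fst q) (snd q) (u,v)" by (simp add: P_def)
      then show ?thesis by blast
    qed simp
  qed
  obtain g' where g': "\<And>y \<epsilon>. \<epsilon> > 0 \<Longrightarrow> P y \<epsilon> (g' (y, \<epsilon>))"
    using choice[OF ex] by auto
  define g where "g y \<epsilon> = g' (y, \<epsilon>)" for y \<epsilon>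
  have g: "\<And>y \<epsilon>. \<epsilon> > 0 \<Longrightarrow> fst (g y \<epsilon>) \<in> Em \<and> snd (g y \<epsilon>) \<in> Ep \<and> norm (fst (g y \<epsilon>)) \<le> M0 * norm y \<and> norm (snd (g y \<epsilon>)) \<le> M0 * norm y \<and> norm (y - (fst (g y \<epsilon>) + snd (g y \<epsilon>))) < \<epsilon>"
    using g' unfolding g_def P_def by simp
  have main: "\<exists>U\<in>Em. \<exists>V\<in>Ep. y = U + V \<and> norm U \<le> 2 * M0 * norm y" for y
  proof (cases "y = 0")
    case True
    then show ?thesis using sm sp by (auto intro!: bexI[of _ 0] subspace_0)
  next
    case False
    define e where "e n = norm y / 2^(Suc n)" for n
    have e: "e n > 0" for n using False by (simp add: e_def)
    define Y where "Y = rec_nat y (\<lambda>n yn. yn - (fst (g yn (e n)) + snd (g yn (e n))))"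
    define U where "U n = fst (g (Y n) (e n))" for n
    define V where "V n = snd (g (Y n) (e n))" for n
    have Y0: "Y 0 = y" by (simp add: Y_def)
    have YS: "Y (Suc n) = Y n - (U n + V n)" for n by (simp add: Y_def U_def V_def)
    have UV: "U n \<in> Em" "V n \<in> Ep" "norm (U n) \<le> M0 * norm (Y n)" "norm (V n) \<le> M0 * norm (Y n)"
      "norm (Y (Suc n)) < e n" for n
      using g[OF e, of "Y n" n] by (simp_all add: U_def V_def YS)
    have nY: "norm (Y n) \<le> norm y * (1/2)^n" for n
    proof (cases n)
      case 0 then show ?thesis by (simp add: Y0)
    next
      case (Suc m) then show ?thesis using UV(5)[of m] by (simp add: e_def field_simps)
    qed
    have nU: "norm (U n) \<le> (M0 * norm y) * (1/2)^n" for n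
    proof -
      have "M0 * norm (Y n) \<le> M0 * (norm y * (1/2)^n)" by (rule mult_left_mono[OF nY]) (use M0 in simp)
      then show ?thesis using UV(3)[of n] by (simp add: mult.assoc)
    qed
    have nV: "norm (V n) \<le> (M0 * norm y) * (1/2)^n" for n
    proof -
      have "M0 * norm (Y n) \<le> M0 * (norm y * (1/2)^n)" by (rule mult_left_mono[OF nY]) (use M0 in simp)
      then show ?thesis using UV(4)[of n] by (simp add: mult.assoc)
    qed
    have sU: "summable U" and bU: "norm (suminf U) \<le> (M0 * norm y) / (1 - 1/2)"
      using geom_bound[of U "M0 * norm y" "1/2", OF nU] by auto
    have sV: "summable V" using geom_bound[of V "M0 * norm y" "1/2", OF nV] by auto
    have Ysum: "Y n = y - (\<Sum>i<n. U i + V i)" for n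
      by (induction n) (simp_all add: Y0 YS)
    have "Y \<longlonglongrightarrow> 0"
    proof (rule Lim_null_comparison[where g = "\<lambda>n. norm y * (1/2)^n"])
      show "\<forall>\<^sub>F n in sequentially. norm (Y n) \<le> norm y * (1/2)^n" using nY by simp
      show "(\<lambda>n. norm y * (1/2)^n) \<longlonglongrightarrow> 0"
        by (intro tendsto_mult_right_zero LIMSEQ_power_zero) simp
    qed
    then have "(\<lambda>n. y - Y n) \<longlonglongrightarrow> y - 0" by (intro tendsto_diff) auto
    then have l1: "(\<lambda>n. \<Sum>i<n. U i + V i) \<longlonglongrightarrow> y" by (simp add: Ysum)
    have "(\<lambda>n. (\<Sum>i<n. U i) + (\<Sum>i<n. V i)) \<longlonglongrightarrow> suminf U + suminf V"
      by (intro tendsto_add summable_LIMSEQ sU sV)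
    then have "(\<lambda>n. \<Sum>i<n. U i + V i) \<longlonglongrightarrow> suminf U + suminf V" by (simp add: sum.distrib)
    with l1 have "y = suminf U + suminf V" using LIMSEQ_unique by blast
    moreover have "suminf U \<in> Em" by (rule suminf_in_closed_subspace[OF cm sm sU UV(1)])
    moreover have "suminf V \<in> Ep" by (rule suminf_in_closed_subspace[OF cp sp sV UV(2)])
    moreover have "norm (suminf U) \<le> 2 * M0 * norm y" using bU by simp
    ultimately show ?thesis by blast
  qed
  have "norm u \<le> (2 * M0) * norm (u + v)" if "u \<in> Em" "v \<in> Ep" for u v
  proof -
    obtain U V where UV: "U \<in> Em" "V \<in> Ep" "u + v = U + V" "norm U \<le> 2 * M0 * norm (u+v)"
      using main[of "u+v"] by blast
    have "u - U = V - v" using UV(3) by (simp add: algebra_simps)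
    moreover have "u - U \<in> Em" using that UV sm by (simp add: subspace_diff)
    moreover have "V - v \<in> Ep" using that UV sp by (simp add: subspace_diff)
    ultimately have "u - U \<in> Em \<inter> Ep" by simp
    then have "u - U = 0" unfolding int0 by simp
    then show ?thesis using UV by simp
  qed
  then show ?thesis using M0 by (intro exI[of _ "2*M0"]) auto
qed

lemma subspace_closure_gen:
  fixes S :: "'a::real_normed_vector set"
  assumes "subspace S" shows "subspace (closure S)"
  unfolding subspace_def
proof (intro conjI ballI allI)
  show "0 \<in> closure S" using assms closure_subset subspace_0 by blast
next
  fix x y assume "x \<in> closure S" "y \<in> closure S"
  then obtain f g where f: "\<forall>n. f n \<in> S" "f \<longlonglongrightarrow> x" and g: "\<forall>n. g n \<in> S" "g \<longlonglongrightarrow> y"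
    unfolding closure_sequential by blast
  have "\<forall>n. f n + g n \<in> S" using f g assms subspace_add by blast
  moreover have "(\<lambda>n. f n + g n) \<longlonglongrightarrow> x + y" using f g by (intro tendsto_add) auto
  ultimately show "x + y \<in> closure S" unfolding closure_sequential by (intro exI[of _ "\<lambda>n. f n + g n"]) auto
next
  fix c :: real and x assume "x \<in> closure S"
  then obtain f where f: "\<forall>n. f n \<in> S" "f \<longlonglongrightarrow> x"
    unfolding closure_sequential by blast
  have "\<forall>n. c *\<^sub>R f n \<in> S" using f assms subspace_scale by blast
  moreover have "(\<lambda>n. c *\<^sub>R f n) \<longlonglongrightarrow> c *\<^sub>R x" using f by (intro tendsto_scaleR) auto
  ultimately show "c *\<^sub>R x \<in> closure S" unfolding closure_sequential by (intro exI[of _ "\<lambda>n. c *\<^sub>R f n"]) auto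
qed

definition pmap :: "('a \<Rightarrow> 'a) \<Rightarrow> 'a \<times> 'a \<Rightarrow> 'a \<times> 'a" where
  "pmap f z = (f (fst z), f (snd z))"

definition rot :: "complex \<Rightarrow> 'a::real_vector \<times> 'a \<Rightarrow> 'a \<times> 'a" where
  "rot \<mu> z = (Re \<mu> *\<^sub>R fst z - Im \<mu> *\<^sub>R snd z, Im \<mu> *\<^sub>R fst z + Re \<mu> *\<^sub>R snd z)"

lemma rot_rot: "rot \<mu> (rot \<nu> z) = rot (\<mu> * \<nu>) z"
  by (simp add: rot_def scaleR_add_right scaleR_diff_right scaleR_diff_left scaleR_add_left)

lemma rot_1: "rot 1 z = z" by (simp add: rot_def)

lemma bounded_linear_rot: "bounded_linear (rot \<mu> :: 'a::real_normed_vector \<times> 'a \<Rightarrow> _)"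
  unfolding rot_def
  by (intro bounded_linear_Pair bounded_linear_add bounded_linear_sub
      bounded_linear_compose[OF bounded_linear_scaleR_right bounded_linear_fst]
      bounded_linear_compose[OF bounded_linear_scaleR_right bounded_linear_snd])

lemma norm_rot: "norm (rot \<mu> z) \<le> 4 * cmod \<mu> * norm (z :: 'a::real_normed_vector \<times> 'a)"
proof -
  obtain x y where z: "z = (x,y)" by fastforce
  have re: "\<bar>Re \<mu>\<bar> \<le> cmod \<mu>" "\<bar>Im \<mu>\<bar> \<le> cmod \<mu>" by (simp_all add: abs_Re_le_cmod abs_Im_le_cmod)
  have nx: "norm x \<le> norm z" "norm y \<le> norm z" unfolding z by (simp_all add: norm_fst_le norm_snd_le)
  have b: "norm (c *\<^sub>R x + d *\<^sub>R y) \<le> 2 * cmod \<mu> * norm z" if "\<bar>c\<bar> \<le> cmod \<mu>" "\<bar>d\<bar> \<le> cmod \<mu>" for c d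
  proof -
    have "norm (c *\<^sub>R x + d *\<^sub>R y) \<le> \<bar>c\<bar> * norm x + \<bar>d\<bar> * norm y"
      using norm_triangle_ineq[of "c *\<^sub>R x" "d *\<^sub>R y"] by simp
    also have "\<dots> \<le> cmod \<mu> * norm z + cmod \<mu> * norm z"
      by (intro add_mono mult_mono) (use that nx in auto)
    finally show ?thesis by simp
  qed
  have "norm (rot \<mu> z) \<le> norm (Re \<mu> *\<^sub>R x + (- Im \<mu>) *\<^sub>R y) + norm (Im \<mu> *\<^sub>R x + Re \<mu> *\<^sub>R y)"
    unfolding rot_def z using norm_Pair_le by simp
  also have "\<dots> \<le> 2 * cmod \<mu> * norm z + 2 * cmod \<mu> * norm z"
    by (intro add_mono b) (use re in auto)
  finally show ?thesis by simp
qed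

lemma pmap_rot:
  assumes "linear f" shows "pmap f (rot \<mu> z) = rot \<mu> (pmap f z)"
  using assms by (simp add: pmap_def rot_def linear_diff linear_add linear_scale)

lemma bounded_linear_pmap:
  assumes "bounded_linear f" shows "bounded_linear (pmap f)"
  unfolding pmap_def
  by (intro bounded_linear_Pair bounded_linear_compose[OF assms] bounded_linear_fst bounded_linear_snd)

lemma pmap_comp: "pmap f (pmap g z) = pmap (f \<circ> g) z" by (simp add: pmap_def)

definition BA :: "('a::real_normed_vector \<Rightarrow> 'a) \<Rightarrow> ('a \<Rightarrow> 'a) \<Rightarrow> 'a set" where
  "BA T Ti = {x. \<exists>K N. \<forall>n\<ge>N. norm ((T ^^ n) x) \<le> K \<and> norm ((Ti ^^ n) x) \<le> K}"

lemma BA_sym: "BA T Ti = BA Ti T" unfolding BA_def by blast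

definition Bs :: "('a::real_normed_vector \<Rightarrow> 'a) \<Rightarrow> ('a \<Rightarrow> 'a) \<Rightarrow> 'a set" where
  "Bs T Ti = {x. \<exists>K>0. \<exists>k m :: nat \<Rightarrow> nat.
      strict_mono k \<and> strict_mono m \<and> (\<forall>n. k n > 0 \<and> m n > 0) \<and>
      (\<forall>n. norm ((T ^^ k n) x) < K \<and> norm ((Ti ^^ m n) x) < K)}"

definition proj :: "'a::real_vector set \<Rightarrow> 'a set \<Rightarrow> 'a \<Rightarrow> 'a" where
  "proj A B x = (THE u. u \<in> A \<and> (\<exists>v\<in>B. x = u + v))"

lemma bounded_linear_funpow:
  fixes f :: "'a::real_normed_vector \<Rightarrow> 'a"
  assumes "bounded_linear f" shows "bounded_linear (f ^^ n)"
proof (induction n)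
  case 0
  have "(f ^^ 0) = (\<lambda>x. x)" by (rule ext) simp
  then show ?case using bounded_linear_ident by metis
next
  case (Suc n) then show ?case using bounded_linear_compose[OF assms Suc] by (simp add: o_def)
qed

locale ghyp =
  fixes T Ti :: "'a::banach \<Rightarrow> 'a" and Em Ep :: "'a set" and C t :: real
  assumes blT: "bounded_linear T" and blTi: "bounded_linear Ti"
    and TTi: "\<And>x. T (Ti x) = x" and TiT: "\<And>x. Ti (T x) = x"
    and cm: "closed Em" and cp: "closed Ep" and sm: "subspace Em" and sp: "subspace Ep"
    and int0: "Em \<inter> Ep = {0}" and dec: "\<forall>z. \<exists>u\<in>Em. \<exists>v\<in>Ep. z = u + v"
    and TEp: "\<And>x. x \<in> Ep \<Longrightarrow> T x \<in> Ep" and TiEm: "\<And>x. x \<in> Em \<Longrightarrow> Ti x \<in> Em"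
    and C: "C > 0" and t: "0 < t" "t < 1"
    and contrP: "\<And>n x. x \<in> Ep \<Longrightarrow> norm ((T ^^ n) x) \<le> C * t^n * norm x"
    and contrM: "\<And>n x. x \<in> Em \<Longrightarrow> norm ((Ti ^^ n) x) \<le> C * t^n * norm x"
begin

lemma swap: "ghyp Ti T Ep Em C t"
proof -
  have i0: "Ep \<inter> Em = {0}" using int0 by blast
  have d: "\<forall>z. \<exists>u\<in>Ep. \<exists>v\<in>Em. z = u + v" using dec by (metis add.commute)
  show ?thesis by (rule ghyp.intro[OF blTi blT TiT TTi cp cm sp sm i0 d TiEm TEp C t(1) t(2) contrM contrP])
qed

lemma dec_unique: "u \<in> Em \<Longrightarrow> v \<in> Ep \<Longrightarrow> u' \<in> Em \<Longrightarrow> v' \<in> Ep \<Longrightarrow> u + v = u' + v' \<Longrightarrow> u = u' \<and> v = v'"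
proof -
  assume a: "u \<in> Em" "v \<in> Ep" "u' \<in> Em" "v' \<in> Ep" "u + v = u' + v'"
  have "u - u' = v' - v" using a(5) by (simp add: algebra_simps)
  moreover have "u - u' \<in> Em" using a sm by (simp add: subspace_diff)
  moreover have "v' - v \<in> Ep" using a sp by (simp add: subspace_diff)
  ultimately have "u - u' \<in> Em \<inter> Ep" by simp
  then have "u - u' = 0" unfolding int0 by simp
  then show ?thesis using a(5) by simp
qed

abbreviation "pm \<equiv> proj Em Ep"
abbreviation "pp \<equiv> proj Ep Em"

lemma proj_props: "pm x \<in> Em" "pp x \<in> Ep" "pm x + pp x = x"
proof -
  obtain u v where uv: "u \<in> Em" "v \<in> Ep" "x = u + v" using dec by blast
  have "pm x = u" unfolding proj_def
    by (rule the_equality) (use uv dec_unique in blast)+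
  moreover have "pp x = v" unfolding proj_def
    by (rule the_equality) (use uv dec_unique in \<open>auto simp: add.commute\<close>)
  ultimately show "pm x \<in> Em" "pp x \<in> Ep" "pm x + pp x = x" using uv by auto
qed

lemma proj_eq: "u \<in> Em \<Longrightarrow> v \<in> Ep \<Longrightarrow> pm (u + v) = u \<and> pp (u + v) = v"
  using dec_unique[of u v "pm (u+v)" "pp (u+v)"] proj_props[of "u+v"] by auto

lemma linear_pp: "linear pp"
proof (rule linearI)
  fix x y
  have "pp (x + y) = pp ((pm x + pm y) + (pp x + pp y))"
    using proj_props[of x] proj_props[of y] by (simp add: algebra_simps)
  also have "\<dots> = pp x + pp y"
    using proj_eq proj_props sm sp by (simp add: subspace_add)
  finally show "pp (x + y) = pp x + pp y" .
next
  fix c :: real and x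
  have "pp (c *\<^sub>R x) = pp (c *\<^sub>R pm x + c *\<^sub>R pp x)"
    using proj_props[of x] by (simp flip: scaleR_add_right)
  also have "\<dots> = c *\<^sub>R pp x"
    using proj_eq proj_props sm sp by (simp add: subspace_scale)
  finally show "pp (c *\<^sub>R x) = c *\<^sub>R pp x" .
qed

lemma bounded_pp: "\<exists>M>0. \<forall>x. norm (pp x) \<le> M * norm x"
proof -
  obtain M where M: "M > 0" "\<forall>v\<in>Ep. \<forall>u\<in>Em. norm v \<le> M * norm (v + u)"
    using bounded_proj[OF cp cm sp sm _ ] int0 dec by (metis Int_commute add.commute)
  have "norm (pp x) \<le> M * norm x" for x
    using M(2) proj_props[of x] by (metis add.commute)
  then show ?thesis using M by blast
qed

lemma bl_pp: "bounded_linear pp"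
proof -
  obtain M where "M > 0" "\<forall>x. norm (pp x) \<le> M * norm x" using bounded_pp by blast
  then show ?thesis using linear_pp
    by (intro bounded_linear_intro[where K=M]) (auto simp: linear_add linear_scale mult.commute)
qed

end

context ghyp begin

lemma blTn: "bounded_linear (T ^^ n)" by (rule bounded_linear_funpow[OF blT])
lemma blTin: "bounded_linear (Ti ^^ n)" by (rule bounded_linear_funpow[OF blTi])

lemma TTin: "(T ^^ n) ((Ti ^^ n) x) = x"
proof (induction n arbitrary: x)
  case (Suc n)
  have "(T ^^ Suc n) ((Ti ^^ Suc n) x) = (T ^^ n) (T (Ti ((Ti ^^ n) x)))"
    by (simp add: funpow_swap1)
  then show ?case using Suc TTi by simp
qed simp

lemma TiTn: "(Ti ^^ n) ((T ^^ n) x) = x"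
proof (induction n arbitrary: x)
  case (Suc n)
  have "(Ti ^^ Suc n) ((T ^^ Suc n) x) = (Ti ^^ n) (Ti (T ((T ^^ n) x)))"
    by (simp add: funpow_swap1)
  then show ?case using Suc TiT by simp
qed simp

lemma TEpn: "x \<in> Ep \<Longrightarrow> (T ^^ n) x \<in> Ep"
  by (induction n) (auto intro: TEp)

lemma TiEmn: "x \<in> Em \<Longrightarrow> (Ti ^^ n) x \<in> Em"
  by (induction n) (auto intro: TiEm)

lemma contrP': "x \<in> Ep \<Longrightarrow> norm ((T ^^ n) x) \<le> C * norm x"
proof -
  assume x: "x \<in> Ep"
  have "C * t^n * norm x \<le> C * 1 * norm x"
    using C t by (intro mult_right_mono mult_left_mono power_le_one) auto
  then show ?thesis using contrP[OF x, of n] by simp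
qed

lemma contrM': "x \<in> Em \<Longrightarrow> norm ((Ti ^^ n) x) \<le> C * norm x"
proof -
  assume x: "x \<in> Em"
  have "C * t^n * norm x \<le> C * 1 * norm x"
    using C t by (intro mult_right_mono mult_left_mono power_le_one) auto
  then show ?thesis using contrM[OF x, of n] by simp
qed

lemma subspace_BA: "subspace (BA T Ti)"
  unfolding subspace_def
proof (intro conjI ballI allI)
  show "0 \<in> BA T Ti" unfolding BA_def
    using linear_0[OF bounded_linear.linear[OF blTn]] linear_0[OF bounded_linear.linear[OF blTin]]
    by (intro CollectI exI[of _ 0]) auto
next
  fix x y assume "x \<in> BA T Ti" "y \<in> BA T Ti"
  then obtain K1 N1 K2 N2 where
    x: "\<forall>n\<ge>N1. norm ((T ^^ n) x) \<le> K1 \<and> norm ((Ti ^^ n) x) \<le> K1" and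
    y: "\<forall>n\<ge>N2. norm ((T ^^ n) y) \<le> K2 \<and> norm ((Ti ^^ n) y) \<le> K2"
    unfolding BA_def by blast
  have "norm ((T ^^ n) (x + y)) \<le> K1 + K2 \<and> norm ((Ti ^^ n) (x + y)) \<le> K1 + K2"
    if "n \<ge> max N1 N2" for n
  proof -
    have e1: "(T ^^ n) (x + y) = (T ^^ n) x + (T ^^ n) y" by (rule linear_add[OF bounded_linear.linear[OF blTn]])
    have e2: "(Ti ^^ n) (x + y) = (Ti ^^ n) x + (Ti ^^ n) y" by (rule linear_add[OF bounded_linear.linear[OF blTin]])
    have "norm ((T ^^ n) x) \<le> K1" "norm ((Ti ^^ n) x) \<le> K1" using x that by auto
    moreover have "norm ((T ^^ n) y) \<le> K2" "norm ((Ti ^^ n) y) \<le> K2" using y that by auto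
    ultimately show ?thesis unfolding e1 e2
      using norm_triangle_ineq[of "(T ^^ n) x" "(T ^^ n) y"] norm_triangle_ineq[of "(Ti ^^ n) x" "(Ti ^^ n) y"]
      by linarith
  qed
  then show "x + y \<in> BA T Ti" unfolding BA_def by blast
next
  fix c :: real and x assume "x \<in> BA T Ti"
  then obtain K1 N1 where
    x: "\<forall>n\<ge>N1. norm ((T ^^ n) x) \<le> K1 \<and> norm ((Ti ^^ n) x) \<le> K1"
    unfolding BA_def by blast
  have "norm ((T ^^ n) (c *\<^sub>R x)) \<le> \<bar>c\<bar> * K1 \<and> norm ((Ti ^^ n) (c *\<^sub>R x)) \<le> \<bar>c\<bar> * K1"
    if "n \<ge> N1" for n
  proof -
    have "(T ^^ n) (c *\<^sub>R x) = c *\<^sub>R (T ^^ n) x" by (rule linear_scale[OF bounded_linear.linear[OF blTn]])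
    moreover have "(Ti ^^ n) (c *\<^sub>R x) = c *\<^sub>R (Ti ^^ n) x" by (rule linear_scale[OF bounded_linear.linear[OF blTin]])
    moreover have "norm ((T ^^ n) x) \<le> K1" "norm ((Ti ^^ n) x) \<le> K1" using x that by auto
    ultimately show ?thesis by (simp add: mult_left_mono)
  qed
  then show "c *\<^sub>R x \<in> BA T Ti" unfolding BA_def by blast
qed

lemma BA_Bs: "BA T Ti \<subseteq> Bs T Ti"
proof
  fix x assume "x \<in> BA T Ti"
  then obtain K N where x: "\<forall>n\<ge>N. norm ((T ^^ n) x) \<le> K \<and> norm ((Ti ^^ n) x) \<le> K"
    unfolding BA_def by blast
  have K: "K \<ge> 0" using x norm_ge_zero order_trans by blast
  define k where "k n = n + N + 1" for n
  have "strict_mono k" unfolding k_def by (rule strict_monoI) simp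
  moreover have "\<forall>n. k n > 0" unfolding k_def by simp
  moreover have "\<forall>n. norm ((T ^^ k n) x) < K + 1 \<and> norm ((Ti ^^ k n) x) < K + 1"
  proof
    fix n
    show "norm ((T ^^ k n) x) < K + 1 \<and> norm ((Ti ^^ k n) x) < K + 1"
      using x[rule_format, of "n + N + 1"] unfolding k_def by simp
  qed
  ultimately show "x \<in> Bs T Ti" unfolding Bs_def using K
    by (intro CollectI exI[of _ "K+1"] conjI exI[of _ k]) auto
qed

lemma key_pp:
  fixes m :: "nat \<Rightarrow> nat"
  assumes m: "strict_mono m" and xb: "\<And>n. norm ((Ti ^^ m n) x) \<le> K"
  shows "pp x \<in> closure (BA T Ti)"
proof -
  define u where "u = pm x"
  define v where "v = pp x"
  have u: "u \<in> Em" and v: "v \<in> Ep" and xuv: "x = u + v" using proj_props[of x] by (auto simp: u_def v_def)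
  obtain Mq where Mq: "Mq > 0" "\<And>y. norm (pp y) \<le> Mq * norm y" using bounded_pp by blast
  define K' where "K' = K + C * norm u"
  have wv: "norm ((Ti ^^ m n) v) \<le> K'" for n
  proof -
    have "(Ti ^^ m n) v = (Ti ^^ m n) x - (Ti ^^ m n) u"
      using xuv linear_add[OF bounded_linear.linear[OF blTin]] by (simp add: algebra_simps)
    then have "norm ((Ti ^^ m n) v) \<le> norm ((Ti ^^ m n) x) + norm ((Ti ^^ m n) u)"
      using norm_triangle_ineq4 by metis
    then show ?thesis using xb[of n] contrM'[OF u, of "m n"] unfolding K'_def by linarith
  qed
  define a where "a n = pm ((Ti ^^ m n) v)" for n
  define b where "b n = pp ((Ti ^^ m n) v)" for n
  define z where "z n = (T ^^ m n) (a n)" for n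
  have a: "a n \<in> Em" and b: "b n \<in> Ep" for n using proj_props unfolding a_def b_def by auto
  have nb: "norm (b n) \<le> Mq * K'" for n
    using Mq(2)[of "(Ti ^^ m n) v"] wv[of n] Mq(1) unfolding b_def
    by (meson mult_left_mono less_imp_le order_trans)
  have vz: "v = z n + (T ^^ m n) (b n)" for n
  proof -
    have "v = (T ^^ m n) (a n + b n)" using proj_props TTin unfolding a_def b_def by simp
    then show ?thesis unfolding z_def using linear_add[OF bounded_linear.linear[OF blTn]] by simp
  qed
  have zBA: "z n \<in> BA T Ti" for n
  proof -
    have "norm ((T ^^ j) (z n)) \<le> C * norm v + C * norm (b n)" for j
    proof -
      have "(T ^^ j) (z n) = (T ^^ j) v - (T ^^ j) ((T ^^ m n) (b n))"
        using vz[of n] linear_diff[OF bounded_linear.linear[OF blTn]] by (metis add_diff_cancel_right')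
      also have "\<dots> = (T ^^ j) v - (T ^^ (j + m n)) (b n)" by (simp add: funpow_add)
      finally have "norm ((T ^^ j) (z n)) \<le> norm ((T ^^ j) v) + norm ((T ^^ (j + m n)) (b n))"
        using norm_triangle_ineq4 by metis
      then show ?thesis using contrP'[OF v, of j] contrP'[OF b[of n], of "j + m n"] by linarith
    qed
    note f1 = this
    have f2: "norm ((Ti ^^ j) (z n)) \<le> C * norm (a n)" if "j \<ge> m n" for j
    proof -
      have "(Ti ^^ j) (z n) = (Ti ^^ (j - m n)) ((Ti ^^ m n) (z n))"
      proof -
        have "j = (j - m n) + m n" using that by simp
        then have "(Ti ^^ j) = (Ti ^^ (j - m n)) \<circ> (Ti ^^ m n)" by (metis funpow_add)
        then show ?thesis by simp
      qed
      also have "\<dots> = (Ti ^^ (j - m n)) (a n)" unfolding z_def by (simp add: TiTn)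
      finally show ?thesis using contrM'[OF a] by simp
    qed
    have nn: "0 \<le> C * norm (a n)" "0 \<le> C * norm (b n)" "0 \<le> C * norm v" using C by simp_all
    have "\<forall>j\<ge>m n. norm ((T ^^ j) (z n)) \<le> C * norm v + C * norm (b n) + C * norm (a n)
        \<and> norm ((Ti ^^ j) (z n)) \<le> C * norm v + C * norm (b n) + C * norm (a n)"
    proof (intro allI impI)
      fix j assume j: "m n \<le> j"
      show "norm ((T ^^ j) (z n)) \<le> C * norm v + C * norm (b n) + C * norm (a n)
        \<and> norm ((Ti ^^ j) (z n)) \<le> C * norm v + C * norm (b n) + C * norm (a n)"
        using f1[of j] f2[OF j] nn by linarith
    qed
    then show ?thesis unfolding BA_def by blast
  qed
  have "z \<longlonglongrightarrow> v"
  proof -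
    have "norm (z n - v) \<le> (C * Mq * K') * t^n" for n
    proof -
      have "norm (z n - v) = norm ((T ^^ m n) (b n))" using vz[of n] by (simp add: norm_minus_commute)
      also have "\<dots> \<le> C * t^(m n) * norm (b n)" by (rule contrP[OF b])
      also have "\<dots> \<le> C * t^n * (Mq * K')"
        using C t nb[of n] seq_suble[OF m, of n]
        by (intro mult_mono mult_left_mono power_decreasing) auto
      finally show ?thesis by (simp add: algebra_simps)
    qed
    then have ev: "\<forall>\<^sub>F n in sequentially. norm (z n - v) \<le> (C * Mq * K') * t^n"
      by (simp add: always_eventually)
    have lim: "(\<lambda>n. (C * Mq * K') * t^n) \<longlonglongrightarrow> 0"
      using t by (intro tendsto_mult_right_zero LIMSEQ_power_zero) auto
    have "(\<lambda>n. z n - v) \<longlonglongrightarrow> 0" by (rule Lim_null_comparison[OF ev lim])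
    then show ?thesis by (simp add: LIM_zero_iff)
  qed
  then have "v \<in> closure (BA T Ti)" unfolding closure_sequential using zBA by blast
  then show ?thesis by (simp add: v_def)
qed

end

lemma pmap_funpow_Suc: "pmap (f ^^ Suc n) z = pmap f (pmap (f ^^ n) z)"
  by (simp add: pmap_def)

lemma norm_fst_le': "norm (fst p) \<le> norm p" using norm_fst_le[of "fst p" "snd p"] by simp
lemma norm_snd_le': "norm (snd p) \<le> norm p" using norm_snd_le[of "snd p" "fst p"] by simp

lemma rot_in_Times:
  assumes "subspace A" "z \<in> A \<times> A" shows "rot \<mu> z \<in> A \<times> A"
  using assms unfolding rot_def
  by (auto intro!: subspace_add subspace_diff subspace_scale)

context ghyp begin

lemma kernel_bound:
  assumes eq: "pmap T z = rot \<mu> z" and mu: "cmod \<mu> = 1"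
  shows "norm ((T ^^ n) (fst z)) \<le> 4 * norm z \<and> norm ((T ^^ n) (snd z)) \<le> 4 * norm z"
proof -
  have pn: "pmap (T ^^ n) z = rot (\<mu> ^ n) z" for n
  proof (induction n)
    case 0 then show ?case by (simp add: pmap_def rot_1)
  next
    case (Suc n)
    have "pmap (T ^^ Suc n) z = pmap T (pmap (T ^^ n) z)" by (rule pmap_funpow_Suc)
    also have "\<dots> = pmap T (rot (\<mu> ^ n) z)" using Suc.IH by simp
    also have "\<dots> = rot (\<mu> ^ n) (pmap T z)" by (rule pmap_rot[OF bounded_linear.linear[OF blT]])
    also have "\<dots> = rot (\<mu> ^ Suc n) z" by (simp add: eq rot_rot mult.commute)
    finally show ?case .
  qed
  have "norm (pmap (T ^^ n) z) \<le> 4 * norm z"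
    using norm_rot[of "\<mu> ^ n" z] mu by (simp add: pn norm_power)
  then show ?thesis using norm_fst_le'[of "pmap (T ^^ n) z"] norm_snd_le'[of "pmap (T ^^ n) z"]
    by (simp add: pmap_def)
qed

lemma pmap_TTi: "pmap T (pmap Ti z) = z" by (simp add: pmap_def TTi)
lemma pmap_TiT: "pmap Ti (pmap T z) = z" by (simp add: pmap_def TiT)

lemma ker_BA:
  assumes eq: "pmap T z = rot \<mu> z" and mu: "cmod \<mu> = 1"
  shows "fst z \<in> BA T Ti \<and> snd z \<in> BA T Ti"
proof -
  interpret sw: ghyp Ti T Ep Em C t by (rule swap)
  have mu0: "\<mu> \<noteq> 0" using mu by auto
  have "z = pmap Ti (rot \<mu> z)" using pmap_TiT[of z] eq by simp
  also have "\<dots> = rot \<mu> (pmap Ti z)" by (rule pmap_rot[OF bounded_linear.linear[OF blTi]])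
  finally have "rot (inverse \<mu>) z = rot (inverse \<mu>) (rot \<mu> (pmap Ti z))" by simp
  also have "\<dots> = pmap Ti z" using mu0 by (simp add: rot_rot rot_1)
  finally have eq2: "pmap Ti z = rot (inverse \<mu>) z" by simp
  have mu2: "cmod (inverse \<mu>) = 1" using mu by (simp add: norm_inverse)
  have "\<forall>n\<ge>0. norm ((T ^^ n) (fst z)) \<le> 4 * norm z \<and> norm ((Ti ^^ n) (fst z)) \<le> 4 * norm z"
    using kernel_bound[OF eq mu] sw.kernel_bound[OF eq2 mu2] by blast
  moreover have "\<forall>n\<ge>0. norm ((T ^^ n) (snd z)) \<le> 4 * norm z \<and> norm ((Ti ^^ n) (snd z)) \<le> 4 * norm z"
    using kernel_bound[OF eq mu] sw.kernel_bound[OF eq2 mu2] by blast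
  ultimately show ?thesis unfolding BA_def by blast
qed

lemma solve_Ep:
  fixes K :: "('a \<times> 'a) set"
  assumes lam: "cmod la = 1" and cK: "closed K" and sK: "subspace K" and KE: "K \<subseteq> Ep \<times> Ep"
    and KT: "\<And>z. z \<in> K \<Longrightarrow> pmap T z \<in> K" and Kr: "\<And>\<mu> z. z \<in> K \<Longrightarrow> rot \<mu> z \<in> K"
    and w: "w \<in> K"
  shows "\<exists>z\<in>K. pmap T z - rot la z = w"
proof -
  define l where "l = inverse la"
  have la0: "la \<noteq> 0" using lam by auto
  have l: "cmod l = 1" "la * l = 1" using lam la0 by (auto simp: l_def norm_inverse)
  define g where "g n = rot (l ^ n) (pmap (T ^^ n) w)" for n
  define h where "h n = rot (l ^ Suc n) (pmap (T ^^ n) w)" for n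
  have wE: "fst w \<in> Ep" "snd w \<in> Ep" using w KE by auto
  define B where "B = 4 * (C * norm (fst w) + C * norm (snd w))"
  have pb: "norm (pmap (T ^^ n) w) \<le> (C * norm (fst w) + C * norm (snd w)) * t ^ n" for n
  proof -
    have "norm (pmap (T ^^ n) w) \<le> norm ((T ^^ n) (fst w)) + norm ((T ^^ n) (snd w))"
      unfolding pmap_def by (rule norm_Pair_le)
    also have "\<dots> \<le> C * t^n * norm (fst w) + C * t^n * norm (snd w)"
      by (intro add_mono contrP wE)
    finally show ?thesis by (simp add: algebra_simps)
  qed
  have rb: "norm (rot (l ^ k) p) \<le> 4 * norm p" for k p
    using norm_rot[of "l ^ k" p] l by (simp add: norm_power)
  have gb: "norm (g n) \<le> B * t ^ n" for n
    using rb[of n "pmap (T ^^ n) w"] pb[of n] unfolding g_def B_def by (simp add: algebra_simps)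
  have hb: "norm (h n) \<le> B * t ^ n" for n
    using rb[of "Suc n" "pmap (T ^^ n) w"] pb[of n] unfolding h_def B_def by (simp add: algebra_simps)
  have sg: "summable g" using geom_bound(1)[of g B t, OF gb] t by simp
  have sh: "summable h" using geom_bound(1)[of h B t, OF hb] t by simp
  have pK: "pmap (T ^^ n) w \<in> K" for n
  proof (induction n)
    case 0 then show ?case by (simp add: pmap_def w)
  next
    case (Suc n) then show ?case by (simp only: pmap_funpow_Suc KT)
  qed
  have hK: "h n \<in> K" for n unfolding h_def by (rule Kr[OF pK])
  define z where "z = - suminf h"
  have zK: "z \<in> K" unfolding z_def
    by (rule subspace_neg[OF sK suminf_in_closed_subspace[OF cK sK sh hK]])
  have blP: "bounded_linear (pmap T)" by (rule bounded_linear_pmap[OF blT])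
  have Sh: "pmap T (h n) = g (Suc n)" for n
    unfolding h_def g_def by (simp only: pmap_rot[OF bounded_linear.linear[OF blT]] pmap_funpow_Suc)
  have Rh: "rot la (h n) = g n" for n
    unfolding h_def g_def using l by (simp add: rot_rot mult.assoc[symmetric])
  have "pmap T z = - (\<Sum>n. pmap T (h n))"
    unfolding z_def using bounded_linear.suminf[OF blP sh] linear_neg[OF bounded_linear.linear[OF blP]] by simp
  also have "\<dots> = - (\<Sum>n. g (Suc n))" by (simp add: Sh)
  also have "\<dots> = - (suminf g - g 0)" by (simp add: suminf_split_head[OF sg])
  finally have e1: "pmap T z = g 0 - suminf g" by simp
  have "rot la z = - (\<Sum>n. rot la (h n))"
  proof -
    have bl: "bounded_linear (rot la :: 'a \<times> 'a \<Rightarrow> _)" by (rule bounded_linear_rot)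
    show ?thesis
      unfolding z_def using bounded_linear.suminf[OF bl sh] linear_neg[OF bounded_linear.linear[OF bl]] by simp
  qed
  also have "\<dots> = - suminf g" by (simp add: Rh)
  finally have e2: "rot la z = - suminf g" .
  have "g 0 = w" unfolding g_def by (simp add: rot_1 pmap_def)
  then have "pmap T z - rot la z = w" using e1 e2 by simp
  then show ?thesis using zK by blast
qed

end

context ghyp begin

lemma key_pm:
  fixes k :: "nat \<Rightarrow> nat"
  assumes k: "strict_mono k" and xb: "\<And>n. norm ((T ^^ k n) x) \<le> K"
  shows "pm x \<in> closure (BA T Ti)"
proof -
  interpret sw: ghyp Ti T Ep Em C t by (rule swap)
  show ?thesis using sw.key_pp[OF k xb] BA_sym[of Ti T] by simp
qed

lemma Bs_closure: "closure (Bs T Ti) = closure (BA T Ti)"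
proof
  show "closure (BA T Ti) \<subseteq> closure (Bs T Ti)" by (rule closure_mono[OF BA_Bs])
  have "Bs T Ti \<subseteq> closure (BA T Ti)"
  proof
    fix x assume "x \<in> Bs T Ti"
    then obtain K k m where km: "strict_mono (k::nat\<Rightarrow>nat)" "strict_mono (m::nat\<Rightarrow>nat)"
      "\<forall>n. norm ((T ^^ k n) x) < K \<and> norm ((Ti ^^ m n) x) < K"
      unfolding Bs_def by blast
    have "pm x \<in> closure (BA T Ti)" using km by (intro key_pm[of k _ K]) (auto intro: less_imp_le)
    moreover have "pp x \<in> closure (BA T Ti)" using km by (intro key_pp[of m _ K]) (auto intro: less_imp_le)
    ultimately have "pm x + pp x \<in> closure (BA T Ti)"
      using subspace_closure_gen[OF subspace_BA] subspace_add by blast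
    then show "x \<in> closure (BA T Ti)" using proj_props by simp
  qed
  then show "closure (Bs T Ti) \<subseteq> closure (BA T Ti)" by (simp add: closure_minimal)
qed

lemma T_BA: "x \<in> BA T Ti \<Longrightarrow> T x \<in> BA T Ti"
proof -
  assume "x \<in> BA T Ti"
  then obtain K N where x: "\<forall>n\<ge>N. norm ((T ^^ n) x) \<le> K \<and> norm ((Ti ^^ n) x) \<le> K"
    unfolding BA_def by blast
  obtain B where B: "B > 0" "\<And>y. norm (T y) \<le> norm y * B"
    using bounded_linear.pos_bounded[OF blT] by blast
  have "norm ((T ^^ n) (T x)) \<le> K * B + K \<and> norm ((Ti ^^ n) (T x)) \<le> K * B + K" if "n \<ge> Suc N" for n
  proof -
    define n' where "n' = n - 1"
    have n': "n = Suc n'" "n' \<ge> N" using that unfolding n'_def by auto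
    have K0: "K \<ge> 0" using x[rule_format, of N] norm_ge_zero order_trans by blast
    have "(T ^^ n) (T x) = T ((T ^^ n) x)" by (simp add: funpow_swap1)
    then have "norm ((T ^^ n) (T x)) \<le> K * B"
      using B(2)[of "(T ^^ n) x"] x that B(1) by (smt (verit) Suc_leD mult_right_mono)
    moreover have "(Ti ^^ n) (T x) = (Ti ^^ n') x"
    proof -
      have "(Ti ^^ n) (T x) = (Ti ^^ n') (Ti (T x))" unfolding n'(1) funpow_Suc_right by simp
      then show ?thesis by (simp add: TiT)
    qed
    then have "norm ((Ti ^^ n) (T x)) \<le> K" using x n' by simp
    ultimately show ?thesis using K0 B(1) by (smt (verit) mult_nonneg_nonneg)
  qed
  then show "T x \<in> BA T Ti" unfolding BA_def by blast
qed

lemma Ti_BA: "x \<in> BA T Ti \<Longrightarrow> Ti x \<in> BA T Ti"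
proof -
  interpret sw: ghyp Ti T Ep Em C t by (rule swap)
  show "x \<in> BA T Ti \<Longrightarrow> Ti x \<in> BA T Ti" using sw.T_BA BA_sym[of T Ti] by simp
qed

lemma T_F: "T ` closure (BA T Ti) \<subseteq> closure (BA T Ti)"
  by (rule image_closure_subset[OF linear_continuous_on[OF blT] closed_closure])
     (use T_BA closure_subset in blast)

lemma Ti_F: "Ti ` closure (BA T Ti) \<subseteq> closure (BA T Ti)"
  by (rule image_closure_subset[OF linear_continuous_on[OF blTi] closed_closure])
     (use Ti_BA closure_subset in blast)

lemma TF_eq: "T ` closure (BA T Ti) = closure (BA T Ti)"
proof
  show "T ` closure (BA T Ti) \<subseteq> closure (BA T Ti)" by (rule T_F)
  show "closure (BA T Ti) \<subseteq> T ` closure (BA T Ti)"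
  proof
    fix x assume "x \<in> closure (BA T Ti)"
    then have "Ti x \<in> closure (BA T Ti)" using Ti_F by blast
    then show "x \<in> T ` closure (BA T Ti)" using TTi[of x] by (metis imageI)
  qed
qed

lemma pp_F: "pp ` closure (BA T Ti) \<subseteq> closure (BA T Ti)"
proof (rule image_closure_subset[OF linear_continuous_on[OF bl_pp] closed_closure])
  show "pp ` BA T Ti \<subseteq> closure (BA T Ti)"
  proof
    fix y assume "y \<in> pp ` BA T Ti"
    then obtain x where y: "y = pp x" and x: "x \<in> BA T Ti" by blast
    then obtain K N where xb: "\<forall>n\<ge>N. norm ((T ^^ n) x) \<le> K \<and> norm ((Ti ^^ n) x) \<le> K"
      unfolding BA_def by blast
    have "strict_mono (\<lambda>n. n + N)" by (rule strict_monoI) simp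
    moreover have "\<And>n. norm ((Ti ^^ (n + N)) x) \<le> K" using xb by simp
    ultimately show "y \<in> closure (BA T Ti)" unfolding y by (rule key_pp)
  qed
qed

lemma pm_F: "pm ` closure (BA T Ti) \<subseteq> closure (BA T Ti)"
proof -
  interpret sw: ghyp Ti T Ep Em C t by (rule swap)
  show ?thesis using sw.pp_F BA_sym[of T Ti] by simp
qed

lemma solve_Em:
  fixes K :: "('a \<times> 'a) set"
  assumes lam: "cmod la = 1" and cK: "closed K" and sK: "subspace K" and KE: "K \<subseteq> Em \<times> Em"
    and KT: "\<And>z. z \<in> K \<Longrightarrow> pmap Ti z \<in> K" and Kr: "\<And>\<mu> z. z \<in> K \<Longrightarrow> rot \<mu> z \<in> K"
    and w: "w \<in> K"
  shows "\<exists>z\<in>K. pmap T z - rot la z = w"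
proof -
  interpret sw: ghyp Ti T Ep Em C t by (rule swap)
  define l where "l = inverse la"
  have la0: "la \<noteq> 0" using lam by auto
  have l: "cmod l = 1" "la * l = 1" using lam la0 by (auto simp: l_def norm_inverse)
  have w': "- rot l (pmap Ti w) \<in> K" using w KT Kr sK by (simp add: subspace_neg)
  obtain z where z: "z \<in> K" "pmap Ti z - rot l z = - rot l (pmap Ti w)"
    using sw.solve_Ep[OF l(1) cK sK KE KT Kr w'] by blast
  have linP: "linear (pmap T)" by (rule bounded_linear.linear[OF bounded_linear_pmap[OF blT]])
  have linR: "linear (rot la :: 'a \<times> 'a \<Rightarrow> _)" by (rule bounded_linear.linear[OF bounded_linear_rot])
  have linT: "linear T" by (rule bounded_linear.linear[OF blT])
  have "rot la (pmap T (pmap Ti z - rot l z)) = rot la (pmap T (- rot l (pmap Ti w)))" using z by simp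
  moreover have "rot la (pmap T (pmap Ti z - rot l z)) = rot la z - pmap T z"
    by (simp add: linear_diff[OF linP] linear_diff[OF linR] pmap_TTi pmap_rot[OF linT] rot_rot l rot_1)
  moreover have "rot la (pmap T (- rot l (pmap Ti w))) = - w"
    by (simp add: linear_neg[OF linP] linear_neg[OF linR] pmap_TTi pmap_rot[OF linT] rot_rot l rot_1)
  ultimately have "pmap T z - rot la z = w" by (metis minus_diff_eq neg_equal_iff_equal)
  then show ?thesis using z(1) by blast
qed

end

context ghyp begin

lemma L_diff: "pmap T (z1 - z2) - rot la (z1 - z2) = (pmap T z1 - rot la z1) - (pmap T z2 - rot la z2)"
proof -
  have linP: "linear (pmap T)" by (rule bounded_linear.linear[OF bounded_linear_pmap[OF blT]])
  have linR: "linear (rot la :: 'a \<times> 'a \<Rightarrow> _)" by (rule bounded_linear.linear[OF bounded_linear_rot])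
  show ?thesis by (simp add: linear_diff[OF linP] linear_diff[OF linR] algebra_simps)
qed

lemma L_add: "pmap T (z1 + z2) - rot la (z1 + z2) = (pmap T z1 - rot la z1) + (pmap T z2 - rot la z2)"
proof -
  have linP: "linear (pmap T)" by (rule bounded_linear.linear[OF bounded_linear_pmap[OF blT]])
  have linR: "linear (rot la :: 'a \<times> 'a \<Rightarrow> _)" by (rule bounded_linear.linear[OF bounded_linear_rot])
  show ?thesis by (simp add: linear_add[OF linP] linear_add[OF linR] algebra_simps)
qed

lemma pmap_proj: "pmap pm w + pmap pp w = w"
  using proj_props[of "fst w"] proj_props[of "snd w"] by (simp add: pmap_def)

lemma qh: "quotient_hyperbolic T (closure (BA T Ti))"
  unfolding quotient_hyperbolic_def
proof (intro allI impI)
  fix a b :: real assume ab: "a\<^sup>2 + b\<^sup>2 = 1"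
  define la where "la = Complex a b"
  have lam: "cmod la = 1" unfolding la_def using ab by (simp add: complex_norm)
  define F where "F = closure (BA T Ti)"
  have cF: "closed F" and sF: "subspace F" unfolding F_def
    by (simp_all add: subspace_closure_gen[OF subspace_BA])
  have Lform: "pmap T (x,y) - rot la (x,y) = (T x - a *\<^sub>R x + b *\<^sub>R y, T y - b *\<^sub>R x - a *\<^sub>R y)" for x y
    by (simp add: pmap_def rot_def la_def algebra_simps)
  have TF: "T x \<in> F" if "x \<in> F" for x using T_F that unfolding F_def by blast
  have TiF: "Ti x \<in> F" if "x \<in> F" for x using Ti_F that unfolding F_def by blast
  have ppF: "pp x \<in> F" if "x \<in> F" for x using pp_F that unfolding F_def by blast
  have pmF: "pm x \<in> F" if "x \<in> F" for x using pm_F that unfolding F_def by blast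
  have solveP: "\<exists>z\<in>A \<times> A. pmap T z - rot la z = w"
    if "closed A" "subspace A" "A \<subseteq> Ep" "\<And>x. x \<in> A \<Longrightarrow> T x \<in> A" "w \<in> A \<times> A" for A w
  proof (rule solve_Ep[OF lam])
    show "closed (A \<times> A)" using that by (simp add: closed_Times)
    show "subspace (A \<times> A)" using that by (simp add: subspace_Times)
    show "A \<times> A \<subseteq> Ep \<times> Ep" using that by auto
    show "pmap T z \<in> A \<times> A" if "z \<in> A \<times> A" for z using that \<open>\<And>x. x \<in> A \<Longrightarrow> T x \<in> A\<close> by (auto simp: pmap_def)
    show "rot \<mu> z \<in> A \<times> A" if "z \<in> A \<times> A" for \<mu> z using rot_in_Times \<open>subspace A\<close> that by blast
  qed (use that in auto)
  have solveM: "\<exists>z\<in>A \<times> A. pmap T z - rot la z = w"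
    if "closed A" "subspace A" "A \<subseteq> Em" "\<And>x. x \<in> A \<Longrightarrow> Ti x \<in> A" "w \<in> A \<times> A" for A w
  proof (rule solve_Em[OF lam])
    show "closed (A \<times> A)" using that by (simp add: closed_Times)
    show "subspace (A \<times> A)" using that by (simp add: subspace_Times)
    show "A \<times> A \<subseteq> Em \<times> Em" using that by auto
    show "pmap Ti z \<in> A \<times> A" if "z \<in> A \<times> A" for z using that \<open>\<And>x. x \<in> A \<Longrightarrow> Ti x \<in> A\<close> by (auto simp: pmap_def)
    show "rot \<mu> z \<in> A \<times> A" if "z \<in> A \<times> A" for \<mu> z using rot_in_Times \<open>subspace A\<close> that by blast
  qed (use that in auto)
  have inj: "\<forall>x y. T x - a *\<^sub>R x + b *\<^sub>R y \<in> closure (BA T Ti) \<and> T y - b *\<^sub>R x - a *\<^sub>R y \<in> closure (BA T Ti) \<longrightarrow> x \<in> closure (BA T Ti) \<and> y \<in> closure (BA T Ti)"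
  proof (intro allI impI)
    fix x y
    assume h: "T x - a *\<^sub>R x + b *\<^sub>R y \<in> closure (BA T Ti) \<and> T y - b *\<^sub>R x - a *\<^sub>R y \<in> closure (BA T Ti)"
    define w where "w = pmap T (x,y) - rot la (x,y)"
    have wF: "w \<in> F \<times> F" using h unfolding w_def Lform F_def by simp
    have wpK: "pmap pp w \<in> (F \<inter> Ep) \<times> (F \<inter> Ep)" using wF ppF proj_props by (auto simp: pmap_def)
    have wmK: "pmap pm w \<in> (F \<inter> Em) \<times> (F \<inter> Em)" using wF pmF proj_props by (auto simp: pmap_def)
    obtain zp where zp: "zp \<in> (F \<inter> Ep) \<times> (F \<inter> Ep)" "pmap T zp - rot la zp = pmap pp w"
      using solveP[of "F \<inter> Ep" "pmap pp w"] cF cp sF sp wpK TF TEp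
      by (auto simp: subspace_inter closed_Int)
    obtain zm where zm: "zm \<in> (F \<inter> Em) \<times> (F \<inter> Em)" "pmap T zm - rot la zm = pmap pm w"
      using solveM[of "F \<inter> Em" "pmap pm w"] cF cm sF sm wmK TiF TiEm
      by (auto simp: subspace_inter closed_Int)
    define d where "d = (x,y) - zm - zp"
    have "pmap T d - rot la d = w - pmap pm w - pmap pp w"
      unfolding d_def L_diff zm zp w_def by simp
    also have "\<dots> = 0" using pmap_proj[of w] by (simp add: algebra_simps)
    finally have "pmap T d = rot la d" by simp
    then have dBA: "fst d \<in> BA T Ti" "snd d \<in> BA T Ti" using ker_BA lam by auto
    have dF: "fst d \<in> F" "snd d \<in> F" using dBA closure_subset unfolding F_def by auto
    have "x = fst d + fst zm + fst zp" "y = snd d + snd zm + snd zp" unfolding d_def by auto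
    moreover have "fst zm \<in> F" "fst zp \<in> F" "snd zm \<in> F" "snd zp \<in> F" using zm zp by auto
    ultimately have "x \<in> F" "y \<in> F" using dF sF by (metis subspace_add)+
    then show "x \<in> closure (BA T Ti) \<and> y \<in> closure (BA T Ti)" unfolding F_def by simp
  qed
  have surj: "\<forall>u v. \<exists>x y. T x - a *\<^sub>R x + b *\<^sub>R y - u \<in> closure (BA T Ti) \<and> T y - b *\<^sub>R x - a *\<^sub>R y - v \<in> closure (BA T Ti)"
  proof (intro allI)
    fix u v :: 'a
    define w where "w = (u, v)"
    have wpK: "pmap pp w \<in> Ep \<times> Ep" using proj_props by (auto simp: pmap_def)
    have wmK: "pmap pm w \<in> Em \<times> Em" using proj_props by (auto simp: pmap_def)
    obtain zp where zp: "pmap T zp - rot la zp = pmap pp w"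
      using solveP[of Ep "pmap pp w"] cp sp wpK TEp by auto
    obtain zm where zm: "pmap T zm - rot la zm = pmap pm w"
      using solveM[of Em "pmap pm w"] cm sm wmK TiEm by auto
    define z where "z = zm + zp"
    have "pmap T z - rot la z = w" unfolding z_def L_add zm zp using pmap_proj[of w] by simp
    then have "T (fst z) - a *\<^sub>R fst z + b *\<^sub>R snd z - u = 0 \<and> T (snd z) - b *\<^sub>R fst z - a *\<^sub>R snd z - v = 0"
      using Lform[of "fst z" "snd z"] unfolding w_def by simp
    then show "\<exists>x y. T x - a *\<^sub>R x + b *\<^sub>R y - u \<in> closure (BA T Ti) \<and> T y - b *\<^sub>R x - a *\<^sub>R y - v \<in> closure (BA T Ti)"
      using subspace_0[OF sF] unfolding F_def by metis
  qed
  show "(\<forall>x y. T x - a *\<^sub>R x + b *\<^sub>R y \<in> closure (BA T Ti) \<and> T y - b *\<^sub>R x - a *\<^sub>R y \<in> closure (BA T Ti) \<longrightarrow> x \<in> closure (BA T Ti) \<and> y \<in> closure (BA T Ti)) \<and>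
        (\<forall>u v. \<exists>x y. T x - a *\<^sub>R x + b *\<^sub>R y - u \<in> closure (BA T Ti) \<and> T y - b *\<^sub>R x - a *\<^sub>R y - v \<in> closure (BA T Ti))"
    using inj surj by blast
qed

end

theorem theorem4:
  fixes T :: "'a::banach \<Rightarrow> 'a"
  assumes "laut T" and "generalized_hyperbolic T"
  shows "(closure (bounded_set T) = UNIV \<or> has_hyperbolic_component T) \<and>
         (closure (bounded_set T) \<noteq> UNIV \<longrightarrow> quotient_hyperbolic T (closure (bounded_set T)))"
proof -
  have blT: "bounded_linear T" and bijT: "bij T" and blTi: "bounded_linear (inv T)"
    using assms(1) unfolding laut_def by auto
  obtain Em Ep where cm: "closed Em" and cp: "closed Ep" and sm: "subspace Em" and sp: "subspace Ep"
    and int0: "Em \<inter> Ep = {0}" and dec: "\<forall>z. \<exists>u\<in>Em. \<exists>v\<in>Ep. z = u + v"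
    and TEp: "T ` Ep \<subseteq> Ep" and TiEm: "inv T ` Em \<subseteq> Em"
    and ucP: "uniform_contraction_on Ep T" and ucM: "uniform_contraction_on Em (inv T)"
    using assms(2) unfolding generalized_hyperbolic_def by blast
  obtain C1 t1 where c1: "C1 > 0" "0 < t1" "t1 < 1"
    and P: "\<forall>n. \<forall>x\<in>Ep. norm ((T ^^ n) x) \<le> C1 * t1 ^ n * norm x"
    using ucP unfolding uniform_contraction_on_def by blast
  obtain C2 t2 where c2: "C2 > 0" "0 < t2" "t2 < 1"
    and M: "\<forall>n. \<forall>x\<in>Em. norm ((inv T ^^ n) x) \<le> C2 * t2 ^ n * norm x"
    using ucM unfolding uniform_contraction_on_def by blast
  define C where "C = max C1 C2"
  define t where "t = max t1 t2"
  have C: "C > 0" and t: "0 < t" "t < 1" using c1 c2 unfolding C_def t_def by auto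
  have mono: "C' * t' ^ n * norm x \<le> C * t ^ n * norm x"
    if "0 < C'" "C' \<le> C" "0 < t'" "t' \<le> t" for C' t' n and x :: 'a
  proof -
    have "t' ^ n \<le> t ^ n" using that by (intro power_mono) auto
    then have "C' * t' ^ n \<le> C * t ^ n" using that by (intro mult_mono) auto
    then show ?thesis by (intro mult_right_mono) auto
  qed
  have contrP: "norm ((T ^^ n) x) \<le> C * t ^ n * norm x" if "x \<in> Ep" for n x
    using P that mono[of C1 t1 n x] c1 unfolding C_def t_def by (meson max.cobounded1 order_trans)
  have contrM: "norm ((inv T ^^ n) x) \<le> C * t ^ n * norm x" if "x \<in> Em" for n x
    using M that mono[of C2 t2 n x] c2 unfolding C_def t_def by (meson max.cobounded2 order_trans)
  have TTi: "T (inv T x) = x" for x using bijT by (simp add: bij_is_surj surj_f_inv_f)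
  have TiT: "inv T (T x) = x" for x using bijT by (simp add: bij_is_inj inv_f_f)
  interpret g: ghyp T "inv T" Em Ep C t
    by (rule ghyp.intro[OF blT blTi TTi TiT cm cp sm sp int0 dec _ _ C t(1) t(2) contrP contrM])
       (use TEp TiEm in auto)
  have bs: "bounded_set T = Bs T (inv T)" unfolding bounded_set_def Bs_def by simp
  define F where "F = closure (BA T (inv T))"
  have Feq: "closure (bounded_set T) = F" unfolding bs F_def by (rule g.Bs_closure)
  have qh: "quotient_hyperbolic T F" unfolding F_def by (rule g.qh)
  have hc: "has_hyperbolic_component T" if "F \<noteq> UNIV"
    unfolding has_hyperbolic_component_def
    using that qh g.TF_eq subspace_closure_gen[OF g.subspace_BA] unfolding F_def
    by (intro exI[of _ "closure (BA T (inv T))"]) auto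
  show ?thesis unfolding Feq using qh hc by blast
qed

end
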